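(* For every $A\in P(n)$, $$I(2,A)=I(sp,\bar A\circ A)^{1/2}.$$
   Context: $P(n)$ denotes positive semidefinite complex $n\times n$ matrices, $\circ$ the Hadamard (entrywise) product, $\bar A$ the entrywise complex conjugate. $I(2,A)=\min\{\|A\circ B\|_2: B\in P(n),\ \|B\|_2=1\}$ with $\|\cdot\|_2$ the Frobenius norm, and $I(sp,C)=\min\{\|C\circ B\|: B\in P(n),\ \|B\|=1\}$ with $\|\cdot\|$ the spectral norm. *)

theory Defs
  imports "HOL-Analysis.Analysis"
begin

text \<open>n x n complex matrices are rendered as complex^'n^'n, with n = CARD('n).\<close>

definition conj_transpose :: "complex^'n^'m \<Rightarrow> complex^'m^'n" where
  "conj_transpose A = (\<chi> i j. cnj (A $ j $ i))"

definition hermitian :: "complex^'n^'n \<Rightarrow> bool" where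
  "hermitian A \<longleftrightarrow> conj_transpose A = A"

definition psd :: "complex^'n^'n \<Rightarrow> bool" where
  "psd A \<longleftrightarrow> hermitian A \<and>
     (\<forall>x::complex^'n. let q = (\<Sum>i\<in>UNIV. cnj (x $ i) * (A *v x) $ i)
                      in Im q = 0 \<and> Re q \<ge> 0)"

definition hadamard :: "complex^'n^'m \<Rightarrow> complex^'n^'m \<Rightarrow> complex^'n^'m" (infixl "\<circ>\<^sub>H" 70) where
  "A \<circ>\<^sub>H B = (\<chi> i j. A $ i $ j * B $ i $ j)"

definition conj_mat :: "complex^'n^'m \<Rightarrow> complex^'n^'m" where
  "conj_mat A = (\<chi> i j. cnj (A $ i $ j))"

definition frob_norm :: "complex^'n^'m \<Rightarrow> real" where
  "frob_norm A = sqrt (\<Sum>i\<in>UNIV. \<Sum>j\<in>UNIV. (cmod (A $ i $ j))^2)"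

definition spec_norm :: "complex^'n^'m \<Rightarrow> real" where
  "spec_norm A = onorm (\<lambda>x::complex^'n. A *v x)"

definition I2 :: "complex^'n^'n \<Rightarrow> real" where
  "I2 A = Inf {frob_norm (A \<circ>\<^sub>H B) | B. psd B \<and> frob_norm B = 1}"

definition Isp :: "complex^'n^'n \<Rightarrow> real" where
  "Isp C = Inf {spec_norm (C \<circ>\<^sub>H B) | B. psd B \<and> spec_norm B = 1}"

end

theory Submission
  imports Defs
begin

definition sesq :: "complex^'n^'n \<Rightarrow> complex^'n \<Rightarrow> complex^'n \<Rightarrow> complex" where
 "sesq M x y = (\<Sum>i\<in>UNIV. \<Sum>j\<in>UNIV. cnj (x$i) * M$i$j * y$j)"

lemma psd_sesq: "psd M \<longleftrightarrow> hermitian M \<and> (\<forall>x. Im (sesq M x x) = 0 \<and> Re (sesq M x x) \<ge> 0)"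
  unfolding psd_def sesq_def matrix_vector_mult_def Let_def
  by (simp add: sum_distrib_left mult.assoc)

lemma hermitian_iff: "hermitian M \<longleftrightarrow> (\<forall>i j. M$i$j = cnj (M$j$i))"
proof -
  have "hermitian M \<longleftrightarrow> (\<forall>i j. cnj (M$j$i) = M$i$j)"
    unfolding hermitian_def conj_transpose_def by (simp add: vec_eq_iff)
  then show ?thesis by metis
qed

lemma sesq_swap:
  assumes "hermitian M" shows "sesq M y x = cnj (sesq M x y)"
proof -
  have h: "\<And>i j. cnj (M$i$j) = M$j$i" using assms hermitian_iff by (metis complex_cnj_cnj)
  have "cnj (sesq M x y) = (\<Sum>i\<in>UNIV. \<Sum>j\<in>UNIV. x$i * cnj (M$i$j) * cnj (y$j))"
    unfolding sesq_def by (simp add: cnj_sum)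
  also have "\<dots> = (\<Sum>j\<in>UNIV. \<Sum>i\<in>UNIV. x$i * cnj (M$i$j) * cnj (y$j))"
    by (rule sum.swap)
  also have "\<dots> = sesq M y x"
    unfolding sesq_def by (intro sum.cong refl) (simp add: h mult_ac)
  finally show ?thesis by simp
qed

lemma sesq_expand:
  "sesq M (x + s *s y) (x + s *s y) = sesq M x x + s * sesq M x y + cnj s * sesq M y x + cnj s * s * sesq M y y"
  unfolding sesq_def
  by (simp add: sum.distrib sum_distrib_left algebra_simps)

lemma Re_cnj_mult_self: "Im q = 0 \<Longrightarrow> Re (cnj s * s * q) = (cmod s)^2 * Re q"
proof -
  assume q: "Im q = 0"
  have e: "(cmod s)^2 = Re s * Re s + Im s * Im s" using cmod_power2[of s] by (simp only: power2_eq_square)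
  show ?thesis using q unfolding e by (simp add: algebra_simps)
qed

lemma psd_CS:
  assumes "psd M" shows "(cmod (sesq M x y))^2 \<le> Re (sesq M x x) * Re (sesq M y y)"
proof -
  define a where "a = Re (sesq M x x)"
  define c where "c = Re (sesq M y y)"
  define b where "b = sesq M x y"
  have herm: "hermitian M" and nn: "\<And>z. Im (sesq M z z) = 0 \<and> Re (sesq M z z) \<ge> 0"
    using assms psd_sesq by auto
  have c0: "c \<ge> 0" using nn c_def by auto
  have key: "0 \<le> a + 2 * Re (s * b) + (cmod s)^2 * c" for s
  proof -
    have "0 \<le> Re (sesq M (x + s *s y) (x + s *s y))" using nn by blast
    also have "\<dots> = a + Re (s * b) + Re (cnj s * cnj b) + (cmod s)^2 * c"
      unfolding sesq_expand a_def b_def c_def sesq_swap[OF herm, of y x]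
      using Re_cnj_mult_self[of "sesq M y y" s] nn[of y] by (simp only: plus_complex.sel)
    also have "Re (cnj s * cnj b) = Re (s * b)" by simp
    finally show ?thesis by (simp add: algebra_simps)
  qed
  show ?thesis
  proof (cases "c > 0")
    case True
    have "0 \<le> a + 2 * Re ((- cnj b / of_real c) * b) + (cmod (- cnj b / of_real c))^2 * c" using key by blast
    also have "Re ((- cnj b / of_real c) * b) = - ((cmod b)^2 / c)"
      using cmod_power2[of b] by (simp add: algebra_simps power2_eq_square Re_divide_of_real)
    also have "(cmod (- cnj b / of_real c))^2 * c = (cmod b)^2 / c"
      using True by (simp add: norm_divide power_divide power2_eq_square)
    finally have "(cmod b)^2 / c \<le> a" by simp
    then show ?thesis using True unfolding a_def b_def c_def by (simp add: field_simps)
  next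
    case False
    then have c00: "c = 0" using c0 by simp
    show ?thesis
    proof (cases "b = 0")
      case True then show ?thesis using c00 unfolding b_def c_def by simp
    next
      case False
      define t where "t = (a + 1) / (2 * (cmod b)^2)"
      have bp: "(cmod b)^2 > 0" using False by simp
      have "0 \<le> a + 2 * Re ((- of_real t * cnj b) * b) + (cmod (- of_real t * cnj b))^2 * c" using key by blast
      also have "Re ((- of_real t * cnj b) * b) = - t * (cmod b)^2"
        using cmod_power2[of b] by (simp add: algebra_simps power2_eq_square)
      finally have "0 \<le> a - 2 * t * (cmod b)^2" using c00 by simp
      also have "2 * t * (cmod b)^2 = a + 1" unfolding t_def using bp by (simp add: field_simps)
      finally show ?thesis by simp
    qed
  qed
qed

definition outer :: "complex^'n \<Rightarrow> complex^'n \<Rightarrow> complex^'n^'n" where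
  "outer v w = (\<chi> i j. v$i * cnj (w$j))"

definition cin :: "complex^'n \<Rightarrow> complex^'n \<Rightarrow> complex" where
  "cin x y = (\<Sum>i\<in>UNIV. cnj (x$i) * y$i)"

lemma sesq_cin: "sesq M x y = cin x (M *v y)"
  unfolding sesq_def cin_def matrix_vector_mult_def by (simp add: sum_distrib_left mult.assoc)

lemma sesq_outer: "sesq (outer v w) x y = cin x v * cnj (cin y w)"
  unfolding sesq_def cin_def outer_def
  by (simp add: sum_product cnj_sum mult_ac)

lemma sesq_add: "sesq (M + N) x y = sesq M x y + sesq N x y"
  unfolding sesq_def by (simp add: sum.distrib algebra_simps)

lemma sesq_diff: "sesq (M - N) x y = sesq M x y - sesq N x y"
  unfolding sesq_def by (simp add: sum_subtractf algebra_simps)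

lemma sesq_scale: "sesq M (c *s x) (d *s y) = cnj c * d * sesq M x y"
  unfolding sesq_def by (simp add: sum_distrib_left algebra_simps)

lemma mv_axis: "(M *v axis k 1)$i = M$i$k"
  unfolding matrix_vector_mult_def axis_def by (simp add: if_distrib cong: if_cong)

lemma sesq_axis: "sesq M (axis i 1) (axis j 1) = M$i$j"
proof -
  have "\<And>a. cnj (axis i 1 $ a) * M$a$j = (if a = i then M$a$j else 0)" by (simp add: axis_def)
  then show ?thesis unfolding sesq_cin cin_def mv_axis by simp
qed

lemma hadamard_add: "P \<circ>\<^sub>H (M + N) = P \<circ>\<^sub>H M + P \<circ>\<^sub>H N"
  unfolding hadamard_def by (simp add: vec_eq_iff algebra_simps)

lemma hadamard_nth: "(P \<circ>\<^sub>H M)$i$j = P$i$j * M$i$j"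
  unfolding hadamard_def by simp

lemma sesq_hadamard_outer:
  "sesq (P \<circ>\<^sub>H outer v v) x x = sesq P (\<chi> j. cnj (v$j) * x$j) (\<chi> j. cnj (v$j) * x$j)"
  unfolding sesq_def hadamard_def outer_def by (simp add: mult_ac)

lemma psd_minus_outer:
  assumes P: "psd P" and z: "sesq P z z = 1" and v: "v = P *v z"
  shows "psd (P - outer v v)"
proof -
  have herm: "hermitian P" using P psd_sesq by auto
  have hermP: "\<And>i j. cnj (P$i$j) = P$j$i" using herm hermitian_iff by (metis complex_cnj_cnj)
  have h2: "hermitian (P - outer v v)"
    unfolding hermitian_iff outer_def using hermP by (simp add: mult.commute)
  have "Im (sesq (P - outer v v) x x) = 0 \<and> Re (sesq (P - outer v v) x x) \<ge> 0" for x
  proof -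
    have cs: "(cmod (sesq P x z))^2 \<le> Re (sesq P x x) * Re (sesq P z z)" by (rule psd_CS[OF P])
    have e: "cin x v = sesq P x z" using v sesq_cin by metis
    have o: "sesq (outer v v) x x = of_real ((cmod (sesq P x z))^2)"
      unfolding sesq_outer e using complex_norm_square[of "sesq P x z"] by simp
    have nn: "Im (sesq P x x) = 0" "Re (sesq P x x) \<ge> 0" using P psd_sesq by auto
    show ?thesis unfolding sesq_diff o using cs nn z by simp
  qed
  then show ?thesis using h2 psd_sesq by blast
qed

lemma psd_zero_diag:
  assumes Q: "psd Q" and k: "Q$k$k = 0"
  shows "Q$k$j = 0" "Q$j$k = 0"
proof -
  have "(cmod (sesq Q (axis k 1) (axis j 1)))^2 \<le> Re (sesq Q (axis k 1) (axis k 1)) * Re (sesq Q (axis j 1) (axis j 1))"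
    by (rule psd_CS[OF Q])
  then show a: "Q$k$j = 0" unfolding sesq_axis k by simp
  have "hermitian Q" using Q psd_sesq by auto
  then have "Q$j$k = cnj (Q$k$j)" using hermitian_iff by blast
  then show "Q$j$k = 0" using a by simp
qed

lemma mv_scale_axis: "(M *v (c *s axis k 1))$i = M$i$k * c"
proof -
  have "\<And>a. M$i$a * (c *s axis k 1)$a = (if a = k then M$i$a * c else 0)" by (simp add: axis_def)
  then show ?thesis unfolding matrix_vector_mult_def by simp
qed

lemma psd_diag: assumes "psd Q" shows "Im (Q$k$k) = 0" "Re (Q$k$k) \<ge> 0"
  using assms psd_sesq sesq_axis by metis+

lemma schur_aux:
  assumes "finite I" and P: "psd P"
  shows "psd Q \<Longrightarrow> (\<forall>i j. i \<notin> I \<or> j \<notin> I \<longrightarrow> Q$i$j = 0) \<Longrightarrow>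
     Im (sesq (P \<circ>\<^sub>H Q) x x) = 0 \<and> Re (sesq (P \<circ>\<^sub>H Q) x x) \<ge> 0"
  using assms(1)
proof (induction I arbitrary: Q rule: finite_induct)
  case empty
  then have "Q = 0" by (simp add: vec_eq_iff)
  then show ?case by (simp add: sesq_def hadamard_def)
next
  case (insert k I Q)
  have Q: "psd Q" by (rule insert.prems(1))
  have sup: "\<And>i j. i \<notin> insert k I \<or> j \<notin> insert k I \<Longrightarrow> Q$i$j = 0" using insert.prems(2) by blast
  show ?case
  proof (cases "Q$k$k = 0")
    case True
    have "\<forall>i j. i \<notin> I \<or> j \<notin> I \<longrightarrow> Q$i$j = 0"
    proof (intro allI impI)
      fix i j assume "i \<notin> I \<or> j \<notin> I"
      then show "Q$i$j = 0" using sup psd_zero_diag[OF Q True] by (metis insert_iff)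
    qed
    then show ?thesis using insert.IH Q by blast
  next
    case False
    define r where "r = Re (Q$k$k)"
    have Qkk: "Q$k$k = of_real r" using psd_diag[OF Q, of k] unfolding r_def by (simp add: complex_eq_iff)
    have r0: "r > 0" using psd_diag[OF Q, of k] False Qkk unfolding r_def by (metis less_eq_real_def of_real_0)
    define c where "c = complex_of_real (1 / sqrt r)"
    define z where "z = c *s axis k 1"
    have "cnj c * c = of_real ((1/sqrt r) * (1/sqrt r))" unfolding c_def by (simp only: complex_cnj_complex_of_real of_real_mult)
    also have "(1/sqrt r) * (1/sqrt r) = 1 / r" using r0 by (simp add: field_simps)
    finally have cc: "cnj c * c = 1 / of_real r" by simp
    have zz: "sesq Q z z = 1" unfolding z_def sesq_scale sesq_axis cc Qkk using r0 by simp
    define v where "v = Q *v z"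
    have vi: "\<And>i. v$i = Q$i$k * c" unfolding v_def z_def mv_scale_axis by simp
    define Q' where "Q' = Q - outer v v"
    have Q': "psd Q'" unfolding Q'_def by (rule psd_minus_outer[OF Q zz v_def])
    have hermQ: "\<And>i j. cnj (Q$i$j) = Q$j$i" using Q psd_sesq hermitian_iff by (metis complex_cnj_cnj)
    have Q'e: "Q'$i$j = Q$i$j - Q$i$k * Q$k$j / of_real r" for i j
    proof -
      have "Q'$i$j = Q$i$j - Q$i$k * cnj (Q$j$k) * (cnj c * c)"
        unfolding Q'_def outer_def vi by (simp add: mult_ac)
      then show ?thesis unfolding cc hermQ by simp
    qed
    have "\<forall>i j. i \<notin> I \<or> j \<notin> I \<longrightarrow> Q'$i$j = 0"
    proof (intro allI impI)
      fix i j assume ij: "i \<notin> I \<or> j \<notin> I"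
      show "Q'$i$j = 0"
      proof (cases "i = k")
        case True then show ?thesis unfolding Q'e using Qkk r0 by simp
      next
        case ik: False
        show ?thesis
        proof (cases "j = k")
          case True then show ?thesis unfolding Q'e using Qkk r0 by simp
        next
          case False
          then show ?thesis unfolding Q'e using ij ik sup by auto
        qed
      qed
    qed
    then have ih: "Im (sesq (P \<circ>\<^sub>H Q') x x) = 0 \<and> Re (sesq (P \<circ>\<^sub>H Q') x x) \<ge> 0"
      using insert.IH Q' by blast
    have QQ: "Q = Q' + outer v v" unfolding Q'_def by simp
    have "sesq (P \<circ>\<^sub>H Q) x x = sesq (P \<circ>\<^sub>H Q') x x + sesq (P \<circ>\<^sub>H outer v v) x x"
      by (subst QQ) (simp add: hadamard_add sesq_add)
    moreover have "Im (sesq (P \<circ>\<^sub>H outer v v) x x) = 0 \<and> Re (sesq (P \<circ>\<^sub>H outer v v) x x) \<ge> 0"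
      unfolding sesq_hadamard_outer using P psd_sesq by blast
    ultimately show ?thesis using ih by simp
  qed
qed

lemma hermitian_hadamard: "hermitian P \<Longrightarrow> hermitian Q \<Longrightarrow> hermitian (P \<circ>\<^sub>H Q)"
  unfolding hermitian_iff hadamard_nth by (metis complex_cnj_mult)

lemma schur:
  assumes "psd P" "psd Q" shows "psd (P \<circ>\<^sub>H Q)"
proof -
  have "Im (sesq (P \<circ>\<^sub>H Q) x x) = 0 \<and> Re (sesq (P \<circ>\<^sub>H Q) x x) \<ge> 0" for x
    using schur_aux[of UNIV P Q x] assms by simp
  moreover have "hermitian (P \<circ>\<^sub>H Q)" using assms psd_sesq hermitian_hadamard by blast
  ultimately show ?thesis using psd_sesq by blast
qed

lemma psd_conj: assumes "psd A" shows "psd (conj_mat A)"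
proof -
  have nth: "conj_mat A $ i $ j = cnj (A$i$j)" for i j unfolding conj_mat_def by simp
  have h: "hermitian (conj_mat A)" using assms psd_sesq unfolding hermitian_iff nth by metis
  have e: "sesq (conj_mat A) x x = cnj (sesq A (\<chi> i. cnj (x$i)) (\<chi> i. cnj (x$i)))" for x
    unfolding sesq_def nth by (simp add: cnj_sum)
  have a: "Im (sesq A y y) = 0 \<and> 0 \<le> Re (sesq A y y)" for y using assms psd_sesq by blast
  have "Im (sesq (conj_mat A) x x) = 0 \<and> 0 \<le> Re (sesq (conj_mat A) x x)" for x
    unfolding e using a by simp
  then show ?thesis using h psd_sesq by blast
qed

lemma norm_sq: "(norm (x::complex^'n))^2 = (\<Sum>i\<in>UNIV. (cmod (x$i))^2)"
  by (simp add: norm_vec_def L2_set_def sum_nonneg)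

lemma cin_self: "cin x x = of_real ((norm x)^2)"
  unfolding norm_sq cin_def of_real_sum by (intro sum.cong refl) (metis complex_norm_square mult.commute of_real_power)

lemma cin_swap: "cin y x = cnj (cin x y)"
  unfolding cin_def by (simp add: cnj_sum mult.commute)

lemma cin_le: "cmod (cin x y) \<le> norm x * norm y"
proof -
  have "cmod (cin x y) \<le> (\<Sum>i\<in>UNIV. cmod (cnj (x$i) * y$i))"
    unfolding cin_def by (rule norm_sum)
  also have "\<dots> = (\<Sum>i\<in>UNIV. \<bar>cmod (x$i)\<bar> * \<bar>cmod (y$i)\<bar>)" by (simp add: norm_mult)
  also have "\<dots> \<le> L2_set (\<lambda>i. cmod (x$i)) UNIV * L2_set (\<lambda>i. cmod (y$i)) UNIV"
    by (rule L2_set_mult_ineq)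
  also have "\<dots> = norm x * norm y" by (simp add: norm_vec_def)
  finally show ?thesis .
qed

lemma cin_diff: "cin (x - y) (x - y) = cin x x - cin x y - cin y x + cin y y"
proof -
  have "cin (x - y) (x - y) = (\<Sum>i\<in>UNIV. cnj (x$i) * x$i - cnj (x$i) * y$i - cnj (y$i) * x$i + cnj (y$i) * y$i)"
    unfolding cin_def by (intro sum.cong refl) (simp add: algebra_simps)
  also have "\<dots> = cin x x - cin x y - cin y x + cin y y"
    unfolding cin_def by (simp add: sum.distrib sum_subtractf)
  finally show ?thesis .
qed

lemma bl_mv: "bounded_linear (\<lambda>x::complex^'n. M *v x)"
  by (rule matrix_vector_mul_bounded_linear)

lemma spec_le: "norm (M *v x) \<le> spec_norm M * norm x"
  unfolding spec_norm_def by (rule onorm[OF bl_mv])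

lemma spec_leI: "(\<And>x. norm (M *v x) \<le> b * norm x) \<Longrightarrow> spec_norm M \<le> b"
  unfolding spec_norm_def by (rule onorm_le)

lemma exists_unit: "\<exists>u::complex^'n. norm u = 1"
proof -
  obtain k :: 'n where True by blast
  have "\<And>i. (cmod (axis k (1::complex) $ i))^2 = (if i = k then 1 else 0)" by (simp add: axis_def)
  then have "(norm (axis k (1::complex)))^2 = 1" unfolding norm_sq by simp
  then have "norm (axis k (1::complex)) = 1" by (simp add: power2_eq_1_iff)
  then show ?thesis by blast
qed

lemma spec_attained: fixes M :: "complex^'n^'m" shows "\<exists>u. norm u = 1 \<and> norm (M *v u) = spec_norm M"
proof -
  have "compact (sphere (0::complex^'n) 1)" by (rule compact_sphere)
  moreover have "sphere (0::complex^'n) 1 \<noteq> {}" using exists_unit by auto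
  moreover have "continuous_on (sphere 0 1) (\<lambda>x::complex^'n. norm (M *v x))"
    by (intro continuous_intros)
  ultimately obtain u where u: "u \<in> sphere 0 1" and mx: "\<forall>y\<in>sphere 0 1. norm (M *v y) \<le> norm (M *v u)"
    using continuous_attains_sup by blast
  have nu: "norm u = 1" using u by simp
  have "norm (M *v x) \<le> norm (M *v u) * norm x" for x
  proof (cases "x = 0")
    case True then show ?thesis by simp
  next
    case False
    have xs: "(1 / norm x) *\<^sub>R x \<in> sphere 0 1" using False by simp
    have "M *v x = norm x *\<^sub>R (M *v ((1 / norm x) *\<^sub>R x))"
      using False by (simp add: linear.scaleR[OF bounded_linear.linear[OF bl_mv]])
    then have "norm (M *v x) = norm x * norm (M *v ((1 / norm x) *\<^sub>R x))" by simp
    also have "\<dots> \<le> norm x * norm (M *v u)" using mx xs by (simp add: mult_left_mono)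
    finally show ?thesis by (simp add: mult.commute)
  qed
  then have "spec_norm M \<le> norm (M *v u)" by (rule spec_leI)
  moreover have "norm (M *v u) \<le> spec_norm M" using spec_le[of M u] nu by simp
  ultimately show ?thesis using nu by (intro exI[of _ u]) simp
qed

lemma spec_ge_sesq: "norm u = 1 \<Longrightarrow> cmod (sesq M u u) \<le> spec_norm M"
  using cin_le[of u "M *v u"] spec_le[of M u] unfolding sesq_cin by simp

lemma top_eigvec:
  assumes B: "psd B" and sB: "spec_norm B = 1"
  shows "\<exists>u. norm u = 1 \<and> B *v u = u"
proof -
  obtain u where nu: "norm u = 1" and nBu: "norm (B *v u) = 1" using spec_attained[of B] sB by auto
  define z where "z = B *v u"
  have nz: "norm z = 1" using nBu z_def by simp
  have nn: "\<And>x. Im (sesq B x x) = 0 \<and> Re (sesq B x x) \<ge> 0" using B psd_sesq by blast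
  have "sesq B z u = 1" unfolding sesq_cin z_def[symmetric] cin_self nz by simp
  then have "1 \<le> Re (sesq B z z) * Re (sesq B u u)" using psd_CS[OF B, of z u] by simp
  moreover have "Re (sesq B z z) \<le> 1"
  proof -
    have "Re (sesq B z z) \<le> cmod (sesq B z z)" by (rule complex_Re_le_cmod)
    also have "\<dots> \<le> norm z * norm (B *v z)" unfolding sesq_cin by (rule cin_le)
    also have "\<dots> \<le> 1" using spec_le[of B z] sB nz by simp
    finally show ?thesis .
  qed
  moreover have Ru: "Re (sesq B u u) \<le> cmod (cin u z)"
    using complex_Re_le_cmod unfolding sesq_cin z_def by blast
  moreover have "cmod (cin u z) \<le> 1" using cin_le[of u z] nu nz by simp
  moreover have "Re (sesq B z z) \<ge> 0" "Re (sesq B u u) \<ge> 0" using nn by auto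
  ultimately have "Re (sesq B u u) \<ge> 1"
  proof -
    assume h1: "1 \<le> Re (sesq B z z) * Re (sesq B u u)" and h2: "Re (sesq B z z) \<le> 1"
       and h5: "Re (sesq B u u) \<ge> 0"
    have "Re (sesq B z z) * Re (sesq B u u) \<le> 1 * Re (sesq B u u)"
      by (rule mult_right_mono[OF h2 h5])
    then show ?thesis using h1 by linarith
  qed
  then have R1: "Re (sesq B u u) = 1" using Ru \<open>cmod (cin u z) \<le> 1\<close> by simp
  then have "sesq B u u = 1" using nn[of u] by (simp add: complex_eq_iff)
  then have cuz: "cin u z = 1" unfolding sesq_cin z_def by simp
  have "cin (z - u) (z - u) = cin z z - cin z u - cin u z + cin u u" by (rule cin_diff)
  also have "\<dots> = 0"
  proof -
    have a: "cin z u = 1" unfolding cin_swap[of z u] cuz by simp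
    have b: "cin z z = 1" unfolding cin_self nz by simp
    have c: "cin u u = 1" unfolding cin_self nu by simp
    show ?thesis unfolding a b c cuz by simp
  qed
  finally have "cin (z - u) (z - u) = 0" .
  then have "norm (z - u) = 0" using cin_self[of "z - u"] by simp
  then have "z = u" by simp
  then have "B *v u = u" unfolding z_def .
  then show ?thesis using nu by blast
qed

definition Bf :: "complex^'n^'n \<Rightarrow> real^'n \<Rightarrow> real^'n \<Rightarrow> real" where
  "Bf A x y = (\<Sum>i\<in>UNIV. \<Sum>j\<in>UNIV. (cmod (A$i$j))^2 * x$i * y$j)"

definition smplx :: "(real^'n) set" where
  "smplx = {w. (\<forall>i. 0 \<le> w$i) \<and> (\<Sum>i\<in>UNIV. w$i) = 1}"

lemma in_smplx: "w \<in> smplx \<longleftrightarrow> (\<forall>i. 0 \<le> w$i) \<and> (\<Sum>i\<in>UNIV. w$i) = 1"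
  unfolding smplx_def by simp

lemma Bf_sym: assumes "hermitian A" shows "Bf A x y = Bf A y x"
proof -
  have h: "\<And>i j. cmod (A$i$j) = cmod (A$j$i)" using assms hermitian_iff by (metis complex_mod_cnj)
  have "Bf A x y = (\<Sum>j\<in>UNIV. \<Sum>i\<in>UNIV. (cmod (A$i$j))^2 * x$i * y$j)"
    unfolding Bf_def by (rule sum.swap)
  also have "\<dots> = Bf A y x" unfolding Bf_def by (intro sum.cong refl) (simp add: h mult_ac)
  finally show ?thesis .
qed

lemma Bf_expand: "Bf A (w + t *\<^sub>R d) (w + t *\<^sub>R d) = Bf A w w + t * Bf A w d + t * Bf A d w + t^2 * Bf A d d"
  unfolding Bf_def by (simp add: sum.distrib sum_distrib_left algebra_simps power2_eq_square)

lemma Bf_axis: "Bf A w (axis k 1) = (\<Sum>i\<in>UNIV. (cmod (A$i$k))^2 * w$i)"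
proof -
  have "\<And>i j. (cmod (A$i$j))^2 * w$i * axis k 1 $ j = (if j = k then (cmod (A$i$k))^2 * w$i else 0)"
    by (simp add: axis_def)
  then show ?thesis unfolding Bf_def by simp
qed

lemma Bf_diff2: "Bf A w (w - d) = Bf A w w - Bf A w d"
  unfolding Bf_def by (simp add: sum_subtractf algebra_simps)

lemma compact_simplex: "compact (smplx :: (real^'n) set)"
proof -
  have sub: "smplx \<subseteq> cbox (0::real^'n) 1"
  proof
    fix w :: "real^'n" assume w: "w \<in> smplx"
    have "w$i \<le> 1" for i
    proof -
      have "w$i \<le> (\<Sum>j\<in>UNIV. w$j)"
        by (rule member_le_sum) (use w in \<open>auto simp: in_smplx\<close>)
      moreover have "(\<Sum>j\<in>UNIV. w$j) = 1" using w in_smplx by blast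
      ultimately show ?thesis by linarith
    qed
    then show "w \<in> cbox 0 1" using w unfolding in_smplx by (simp add: mem_box_cart)
  qed
  have cl: "closed (smplx :: (real^'n) set)"
    unfolding smplx_def
    by (intro closed_Collect_conj closed_Collect_all closed_Collect_le closed_Collect_eq continuous_intros)
  have "smplx = cbox 0 1 \<inter> (smplx :: (real^'n) set)" using sub by blast
  then show ?thesis using compact_Int_closed[OF compact_cbox cl] by metis
qed

lemma simplex_nonempty: "(axis k 1 :: real^'n) \<in> smplx"
proof -
  have "(\<Sum>i\<in>UNIV. (axis k 1 :: real^'n) $ i) = 1" by (simp add: axis_def)
  moreover have "\<forall>i. 0 \<le> (axis k 1 :: real^'n) $ i" by (simp add: axis_def)
  ultimately show ?thesis unfolding in_smplx by blast
qed

lemma minimizer_exists: fixes A :: "complex^'n^'n" shows "\<exists>w0\<in>smplx. \<forall>w\<in>smplx. Bf A w0 w0 \<le> Bf A w w"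
proof -
  have "continuous_on smplx (\<lambda>w::real^'n. Bf A w w)"
    unfolding Bf_def by (intro continuous_intros)
  moreover have "(smplx :: (real^'n) set) \<noteq> {}" using simplex_nonempty by blast
  ultimately show ?thesis using continuous_attains_inf[OF compact_simplex] by blast
qed

lemma kkt:
  fixes A :: "complex^'n^'n" and w0 :: "real^'n"
  assumes herm: "hermitian A" and w0: "w0 \<in> smplx" and mn: "\<forall>w\<in>smplx. Bf A w0 w0 \<le> Bf A w w"
    and pos: "w0$k > 0"
  shows "(\<Sum>i\<in>UNIV. (cmod (A$i$k))^2 * w0$i) \<le> Bf A w0 w0"
proof (rule ccontr)
  define m where "m = Bf A w0 w0"
  define g where "g = (\<Sum>i\<in>UNIV. (cmod (A$i$k))^2 * w0$i)"
  define d where "d = w0 - axis k 1"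
  define K where "K = Bf A d d"
  assume "\<not> (\<Sum>i\<in>UNIV. (cmod (A$i$k))^2 * w0$i) \<le> Bf A w0 w0"
  then have gm: "g > m" unfolding g_def m_def by simp
  have b1: "Bf A w0 d = m - g" unfolding d_def Bf_diff2 Bf_axis m_def g_def ..
  have b2: "Bf A d w0 = m - g" using b1 Bf_sym[OF herm] by metis
  have w0n: "\<And>j. 0 \<le> w0$j" and w0s: "(\<Sum>j\<in>UNIV. w0$j) = 1" using w0 in_smplx by auto
  have key: "0 \<le> 2 * (m - g) + t * K" if t0: "0 < t" and tk: "t \<le> w0$k" for t
  proof -
    have ax: "\<And>j. (axis k 1 :: real^'n) $ j = (if j = k then 1 else 0)" by (simp add: axis_def)
    have "w0 + t *\<^sub>R d \<in> smplx"
      unfolding in_smplx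
    proof
      show "\<forall>j. 0 \<le> (w0 + t *\<^sub>R d) $ j"
      proof
        fix j
        show "0 \<le> (w0 + t *\<^sub>R d) $ j"
        proof (cases "j = k")
          case True
          have "(w0 + t *\<^sub>R d) $ j = w0$k + t * w0$k - t" using True unfolding d_def by (simp add: ax algebra_simps)
          moreover have "t * w0$k \<ge> 0" using t0 pos by simp
          ultimately show ?thesis using tk by linarith
        next
          case False
          have "(w0 + t *\<^sub>R d) $ j = w0$j + t * w0$j" using False unfolding d_def by (simp add: ax)
          then show ?thesis using w0n[of j] t0 by simp
        qed
      qed
      have "(\<Sum>j\<in>UNIV. (w0 + t *\<^sub>R d) $ j) = (\<Sum>j\<in>UNIV. w0$j) + t * ((\<Sum>j\<in>UNIV. w0$j) - (\<Sum>j\<in>UNIV. (axis k 1 :: real^'n) $ j))"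
        unfolding d_def by (simp add: sum.distrib sum_subtractf sum_distrib_left algebra_simps)
      also have "(\<Sum>j\<in>UNIV. (axis k 1 :: real^'n) $ j) = 1" by (simp add: ax)
      finally show "(\<Sum>j\<in>UNIV. (w0 + t *\<^sub>R d) $ j) = 1" using w0s by simp
    qed
    then have "m \<le> Bf A (w0 + t *\<^sub>R d) (w0 + t *\<^sub>R d)" using mn m_def by blast
    also have "\<dots> = m + t * (2 * (m - g) + t * K)"
      unfolding Bf_expand b1 b2 K_def m_def by (simp add: algebra_simps power2_eq_square)
    finally have "0 \<le> t * (2 * (m - g) + t * K)" by simp
    then show ?thesis using t0 by (simp add: zero_le_mult_iff)
  qed
  define t where "t = min (w0$k) ((g - m) / (\<bar>K\<bar> + 1))"
  have t0: "0 < t" unfolding t_def using pos gm by simp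
  have tk: "t \<le> w0$k" unfolding t_def by simp
  have "t * K \<le> t * \<bar>K\<bar>" using t0 by (simp add: mult_left_mono)
  also have "\<dots> \<le> (g - m) / (\<bar>K\<bar> + 1) * \<bar>K\<bar>" unfolding t_def by (intro mult_right_mono) auto
  also have "\<dots> < g - m"
  proof -
    have "(g - m) / (\<bar>K\<bar> + 1) * \<bar>K\<bar> = (g - m) * (\<bar>K\<bar> / (\<bar>K\<bar> + 1))" by simp
    also have "\<dots> < (g - m) * 1" using gm by (intro mult_strict_left_mono) auto
    finally show ?thesis by simp
  qed
  finally have tK: "t * K < g - m" .
  have "2 * (m - g) + t * K < 0" using tK gm by simp
  then show False using key[OF t0 tk] by linarith
qed

lemma cnj_mult_self: "cnj z * z = of_real ((cmod z)^2)"
  by (metis complex_norm_square mult.commute)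

lemma C_nth: "(conj_mat A \<circ>\<^sub>H A)$i$j = of_real ((cmod (A$i$j))^2)"
  unfolding hadamard_nth conj_mat_def by (simp add: cnj_mult_self)

lemma frob_sq: "(frob_norm M)^2 = (\<Sum>i\<in>UNIV. \<Sum>j\<in>UNIV. (cmod (M$i$j))^2)"
  unfolding frob_norm_def by (simp add: sum_nonneg)

lemma psd_C: "psd A \<Longrightarrow> psd (conj_mat A \<circ>\<^sub>H A)"
  by (intro schur psd_conj)

lemma frob_lower:
  fixes A B :: "complex^'n^'n"
  assumes A: "psd A" and B: "psd B" and fB: "frob_norm B = 1" and mw: "\<forall>w\<in>smplx. m \<le> Bf A w w"
  shows "m \<le> (frob_norm (A \<circ>\<^sub>H B))^2"
proof -
  define P where "P = conj_mat B \<circ>\<^sub>H B"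
  have P: "psd P" unfolding P_def by (rule psd_C[OF B])
  have Pn: "\<And>i j. P$i$j = of_real ((cmod (B$i$j))^2)" unfolding P_def by (rule C_nth)
  define e :: "complex^'n" where "e = (\<chi> i. 1)"
  define r :: "real^'n" where "r = (\<chi> i. \<Sum>j\<in>UNIV. (cmod (B$i$j))^2)"
  define v where "v = P *v e"
  have vn: "\<And>i. v$i = of_real (r$i)" unfolding v_def matrix_vector_mult_def e_def r_def Pn by simp
  have fB2: "(\<Sum>i\<in>UNIV. \<Sum>j\<in>UNIV. (cmod (B$i$j))^2) = 1" using frob_sq[of B] fB by simp
  have "sesq P e e = of_real (\<Sum>i\<in>UNIV. \<Sum>j\<in>UNIV. (cmod (B$i$j))^2)"
    unfolding sesq_def e_def Pn of_real_sum by simp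
  then have ee: "sesq P e e = 1" using fB2 by simp
  have Q: "psd (P - outer v v)" by (rule psd_minus_outer[OF P ee v_def])
  have CQ: "psd ((conj_mat A \<circ>\<^sub>H A) \<circ>\<^sub>H (P - outer v v))" by (rule schur[OF psd_C[OF A] Q])
  then have nn: "Re (sesq ((conj_mat A \<circ>\<^sub>H A) \<circ>\<^sub>H (P - outer v v)) e e) \<ge> 0"
    using psd_sesq by blast
  have "sesq ((conj_mat A \<circ>\<^sub>H A) \<circ>\<^sub>H (P - outer v v)) e e =
     (\<Sum>i\<in>UNIV. \<Sum>j\<in>UNIV. of_real ((cmod (A$i$j))^2 * (cmod (B$i$j))^2 - (cmod (A$i$j))^2 * r$i * r$j))"
    unfolding sesq_def e_def hadamard_nth[of "conj_mat A \<circ>\<^sub>H A"] C_nth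
    by (intro sum.cong refl) (simp add: Pn outer_def vn algebra_simps)
  also have "\<dots> = of_real ((\<Sum>i\<in>UNIV. \<Sum>j\<in>UNIV. (cmod (A$i$j))^2 * (cmod (B$i$j))^2) - Bf A r r)"
    unfolding Bf_def by (simp add: sum_subtractf of_real_sum)
  also have "(\<Sum>i\<in>UNIV. \<Sum>j\<in>UNIV. (cmod (A$i$j))^2 * (cmod (B$i$j))^2) = (frob_norm (A \<circ>\<^sub>H B))^2"
    unfolding frob_sq hadamard_nth by (simp add: norm_mult power_mult_distrib)
  finally have "Bf A r r \<le> (frob_norm (A \<circ>\<^sub>H B))^2" using nn by simp
  moreover have "r \<in> smplx" unfolding in_smplx r_def using fB2 by (simp add: sum_nonneg)
  ultimately show ?thesis using mw by force
qed

lemma spec_lower: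
  fixes A B :: "complex^'n^'n"
  assumes A: "psd A" and B: "psd B" and sB: "spec_norm B = 1" and mw: "\<forall>w\<in>smplx. m \<le> Bf A w w"
  shows "m \<le> spec_norm (conj_mat A \<circ>\<^sub>H A \<circ>\<^sub>H B)"
proof -
  obtain u where nu: "norm u = 1" and Bu: "B *v u = u" using top_eigvec[OF B sB] by blast
  have uu: "sesq B u u = 1" unfolding sesq_cin Bu cin_self nu by simp
  define E where "E = B - outer u u"
  have E: "psd E" unfolding E_def by (rule psd_minus_outer[OF B uu Bu[symmetric]])
  define C where "C = conj_mat A \<circ>\<^sub>H A"
  have C: "psd C" unfolding C_def by (rule psd_C[OF A])
  have CE: "psd (C \<circ>\<^sub>H E)" by (rule schur[OF C E])
  have BE: "B = E + outer u u" unfolding E_def by simp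
  define w :: "real^'n" where "w = (\<chi> j. (cmod (u$j))^2)"
  have w: "w \<in> smplx" unfolding in_smplx w_def using norm_sq[of u] nu by simp
  have y: "(\<chi> j. cnj (u$j) * u$j) = (\<chi> j. complex_of_real (w$j))"
    unfolding w_def by (simp add: vec_eq_iff cnj_mult_self)
  have "sesq (C \<circ>\<^sub>H outer u u) u u = sesq C (\<chi> j. complex_of_real (w$j)) (\<chi> j. complex_of_real (w$j))"
    unfolding sesq_hadamard_outer y ..
  also have "\<dots> = of_real (Bf A w w)"
    unfolding sesq_def Bf_def C_def C_nth by (simp add: mult_ac of_real_sum)
  finally have o: "sesq (C \<circ>\<^sub>H outer u u) u u = of_real (Bf A w w)" .
  have "sesq (C \<circ>\<^sub>H B) u u = sesq (C \<circ>\<^sub>H E) u u + of_real (Bf A w w)"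
    by (subst BE) (simp add: hadamard_add sesq_add o)
  moreover have "Re (sesq (C \<circ>\<^sub>H E) u u) \<ge> 0" using CE psd_sesq by blast
  moreover have "m \<le> Bf A w w" using mw w by blast
  ultimately have "m \<le> Re (sesq (C \<circ>\<^sub>H B) u u)" by simp
  also have "\<dots> \<le> cmod (sesq (C \<circ>\<^sub>H B) u u)" by (rule complex_Re_le_cmod)
  also have "\<dots> \<le> spec_norm (C \<circ>\<^sub>H B)" by (rule spec_ge_sesq[OF nu])
  finally show ?thesis unfolding C_def .
qed

lemma cmod_sym: "hermitian A \<Longrightarrow> cmod (A$i$j) = cmod (A$j$i)"
  using hermitian_iff by (metis complex_mod_cnj)

lemma spec_upper:
  fixes A :: "complex^'n^'n" and w0 :: "real^'n"
  assumes herm: "hermitian A" and w0: "w0 \<in> smplx"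
    and kk: "\<And>k. w0$k > 0 \<Longrightarrow> (\<Sum>i\<in>UNIV. (cmod (A$i$k))^2 * w0$i) \<le> Bf A w0 w0"
  shows "spec_norm (conj_mat A \<circ>\<^sub>H A \<circ>\<^sub>H outer (\<chi> i. complex_of_real (sqrt (w0$i))) (\<chi> i. complex_of_real (sqrt (w0$i))))
           \<le> Bf A w0 w0"
proof -
  define m where "m = Bf A w0 w0"
  define c where "c i j = (cmod (A$i$j))^2" for i j
  define s where "s i = sqrt (w0$i)" for i
  define M where "M = conj_mat A \<circ>\<^sub>H A \<circ>\<^sub>H outer (\<chi> i. complex_of_real (sqrt (w0$i))) (\<chi> i. complex_of_real (sqrt (w0$i)))"
  define G where "G k = (\<Sum>i\<in>UNIV. c i k * w0$i)" for k
  have w0n: "\<And>j. 0 \<le> w0$j" using w0 in_smplx by auto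
  have cn: "\<And>i j. 0 \<le> c i j" unfolding c_def by simp
  have cs: "\<And>i j. c i j = c j i" unfolding c_def using cmod_sym[OF herm] by simp
  have sn: "\<And>i. 0 \<le> s i" unfolding s_def using w0n by simp
  have ss: "\<And>i. s i * s i = w0$i" unfolding s_def using w0n by simp
  have m0: "0 \<le> m" unfolding m_def Bf_def using w0n by (intro sum_nonneg mult_nonneg_nonneg) auto
  have Gm: "\<And>k. w0$k > 0 \<Longrightarrow> G k \<le> m" unfolding G_def c_def m_def using kk by simp
  have Mn: "\<And>i j. M$i$j = of_real (c i j * s i * s j)"
    unfolding M_def hadamard_nth[of "conj_mat A \<circ>\<^sub>H A"] C_nth outer_def c_def s_def by simp
  have "norm (M *v x) \<le> m * norm x" for x
  proof -
    define z where "z j = (if w0$j > 0 then cmod (x$j) else 0)" for j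
    have sz: "\<And>j. s j * cmod (x$j) = s j * z j"
      unfolding z_def s_def using w0n by (simp add: less_le)
    define S where "S i = (\<Sum>j\<in>UNIV. c i j * (z j)^2)" for i
    have row: "(cmod ((M *v x)$i))^2 \<le> w0$i * G i * S i" for i
    proof -
      have "cmod ((M *v x)$i) \<le> (\<Sum>j\<in>UNIV. cmod (M$i$j * x$j))"
        unfolding matrix_vector_mult_def by simp (rule norm_sum)
      also have "\<dots> = s i * (\<Sum>j\<in>UNIV. \<bar>cmod (A$i$j) * s j\<bar> * \<bar>cmod (A$i$j) * z j\<bar>)"
        unfolding sum_distrib_left
      proof (intro sum.cong refl)
        fix j
        have "cmod (M$i$j * x$j) = \<bar>c i j * s i * s j\<bar> * cmod (x$j)"
          unfolding Mn norm_mult norm_of_real ..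
        also have "\<dots> = c i j * s i * (s j * cmod (x$j))"
          using cn[of i j] sn[of i] sn[of j] by (simp add: abs_mult mult_ac)
        also have "\<dots> = s i * (\<bar>cmod (A$i$j) * s j\<bar> * \<bar>cmod (A$i$j) * z j\<bar>)"
          unfolding sz c_def using sn[of j] z_def by (simp add: abs_mult power2_eq_square)
        finally show "cmod (M$i$j * x$j) = s i * (\<bar>cmod (A$i$j) * s j\<bar> * \<bar>cmod (A$i$j) * z j\<bar>)" .
      qed
      also have "\<dots> \<le> s i * (L2_set (\<lambda>j. cmod (A$i$j) * s j) UNIV * L2_set (\<lambda>j. cmod (A$i$j) * z j) UNIV)"
        using sn[of i] by (intro mult_left_mono L2_set_mult_ineq) auto
      finally have le: "cmod ((M *v x)$i) \<le> s i * (L2_set (\<lambda>j. cmod (A$i$j) * s j) UNIV * L2_set (\<lambda>j. cmod (A$i$j) * z j) UNIV)" .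
      have l1: "(L2_set (\<lambda>j. cmod (A$i$j) * s j) UNIV)^2 = G i"
      proof -
        have "(L2_set (\<lambda>j. cmod (A$i$j) * s j) UNIV)^2 = (\<Sum>j\<in>UNIV. (cmod (A$i$j) * s j)^2)"
          unfolding L2_set_def by (simp add: sum_nonneg)
        also have "\<dots> = G i" unfolding G_def
        proof (intro sum.cong refl)
          fix j
          have "(cmod (A$i$j) * s j)^2 = c i j * (s j * s j)" unfolding c_def by (simp add: power2_eq_square)
          then show "(cmod (A$i$j) * s j)^2 = c j i * w0$j" using cs[of i j] ss[of j] by simp
        qed
        finally show ?thesis .
      qed
      have l2: "(L2_set (\<lambda>j. cmod (A$i$j) * z j) UNIV)^2 = S i"
        unfolding L2_set_def S_def by (simp add: sum_nonneg power_mult_distrib c_def)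
      have "(cmod ((M *v x)$i))^2 \<le> (s i * (L2_set (\<lambda>j. cmod (A$i$j) * s j) UNIV * L2_set (\<lambda>j. cmod (A$i$j) * z j) UNIV))^2"
        using le by (intro power_mono) auto
      also have "\<dots> = (s i)^2 * (L2_set (\<lambda>j. cmod (A$i$j) * s j) UNIV)^2 * (L2_set (\<lambda>j. cmod (A$i$j) * z j) UNIV)^2"
        by (simp add: power_mult_distrib)
      also have "\<dots> = w0$i * G i * S i" unfolding l1 l2 using ss[of i] by (simp add: power2_eq_square)
      finally show ?thesis .
    qed
    have S0: "\<And>i. 0 \<le> S i" unfolding S_def using cn by (intro sum_nonneg) simp
    have wG: "w0$i * G i \<le> w0$i * m" for i
    proof (cases "w0$i > 0")
      case True then show ?thesis using Gm by simp
    next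
      case False then have "w0$i = 0" using w0n[of i] by simp
      then show ?thesis by simp
    qed
    have "(norm (M *v x))^2 = (\<Sum>i\<in>UNIV. (cmod ((M *v x)$i))^2)" by (rule norm_sq)
    also have "\<dots> \<le> (\<Sum>i\<in>UNIV. m * (w0$i * S i))"
    proof (rule sum_mono)
      fix i
      have "w0$i * G i * S i \<le> w0$i * m * S i" using wG[of i] S0[of i] by (rule mult_right_mono)
      then show "(cmod ((M *v x)$i))^2 \<le> m * (w0$i * S i)" using row[of i] by (simp add: mult_ac)
    qed
    also have "(\<Sum>i\<in>UNIV. m * (w0$i * S i)) = m * (\<Sum>j\<in>UNIV. (z j)^2 * G j)"
      unfolding S_def G_def sum_distrib_left
      by (subst sum.swap) (simp add: mult_ac)
    also have "\<dots> \<le> m * (\<Sum>j\<in>UNIV. m * (cmod (x$j))^2)"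
    proof (intro mult_left_mono[OF _ m0] sum_mono)
      fix j
      show "(z j)^2 * G j \<le> m * (cmod (x$j))^2"
      proof (cases "w0$j > 0")
        case True
        then have "(z j)^2 * G j \<le> (cmod (x$j))^2 * m" unfolding z_def using Gm[OF True] by (simp add: mult_left_mono)
        then show ?thesis by (simp add: mult.commute)
      next
        case False then show ?thesis unfolding z_def using m0 by simp
      qed
    qed
    also have "\<dots> = (m * norm x)^2" unfolding norm_sq[of x, symmetric] power_mult_distrib sum_distrib_left[symmetric]
      by (simp add: power2_eq_square)
    finally have "(norm (M *v x))^2 \<le> (m * norm x)^2" .
    then show ?thesis by (rule power2_le_imp_le) (simp add: m0)
  qed
  then have "spec_norm M \<le> m" by (rule spec_leI)
  then show ?thesis unfolding M_def m_def .
qed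

lemma psd_outer: "psd (outer y y)"
proof -
  have h: "hermitian (outer y y)" unfolding hermitian_iff outer_def by (simp add: mult.commute)
  have e: "sesq (outer y y) x x = of_real ((cmod (cin x y))^2)" for x
    unfolding sesq_outer using cnj_mult_self[of "cin x y"] by (simp add: mult.commute)
  have "Im (sesq (outer y y) x x) = 0 \<and> 0 \<le> Re (sesq (outer y y) x x)" for x
    unfolding e by (simp only: Re_complex_of_real Im_complex_of_real) simp
  then show ?thesis using h psd_sesq by blast
qed

lemma outer_mv: "outer y y *v x = (\<chi> i. y$i * cin y x)"
  unfolding outer_def matrix_vector_mult_def cin_def by (simp add: vec_eq_iff sum_distrib_left mult_ac)

lemma B0_props:
  fixes w0 :: "real^'n" and A :: "complex^'n^'n"
  assumes w0: "w0 \<in> smplx"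
  defines "y \<equiv> (\<chi> i. complex_of_real (sqrt (w0$i)))"
  shows "frob_norm (outer y y) = 1" "frob_norm (A \<circ>\<^sub>H outer y y) = sqrt (Bf A w0 w0)"
    "spec_norm (outer y y) = 1"
proof -
  have w0n: "\<And>j. 0 \<le> w0$j" and w0s: "(\<Sum>j\<in>UNIV. w0$j) = 1" using w0 in_smplx by auto
  have e: "(cmod (outer y y $i$j))^2 = w0$i * w0$j" for i j
  proof -
    have "outer y y $i$j = of_real (sqrt (w0$i) * sqrt (w0$j))" unfolding outer_def y_def by simp
    then have "cmod (outer y y $i$j) = sqrt (w0$i) * sqrt (w0$j)" by (simp only: norm_of_real) (simp add: abs_mult w0n)
    then show ?thesis using w0n by (simp add: power_mult_distrib)
  qed
  have "(\<Sum>i\<in>UNIV. \<Sum>j\<in>UNIV. (cmod (outer y y $i$j))^2) = (\<Sum>i\<in>UNIV. w0$i) * (\<Sum>j\<in>UNIV. w0$j)"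
    unfolding e sum_product ..
  then show "frob_norm (outer y y) = 1" unfolding frob_norm_def w0s by simp
  have "(\<Sum>i\<in>UNIV. \<Sum>j\<in>UNIV. (cmod ((A \<circ>\<^sub>H outer y y)$i$j))^2) = Bf A w0 w0"
    unfolding Bf_def hadamard_nth norm_mult power_mult_distrib e by (simp add: mult_ac)
  then show "frob_norm (A \<circ>\<^sub>H outer y y) = sqrt (Bf A w0 w0)" unfolding frob_norm_def by simp
  have ny: "norm y = 1"
  proof -
    have "(norm y)^2 = 1" unfolding norm_sq y_def using w0n w0s by simp
    then show ?thesis using power2_eq_iff_nonneg[of "norm y" 1] by simp
  qed
  have nmv: "norm (outer y y *v x) = cmod (cin y x)" for x
  proof -
    have "(norm (outer y y *v x))^2 = (cmod (cin y x))^2 * (norm y)^2"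
      unfolding norm_sq outer_mv by (simp add: norm_mult power_mult_distrib sum_distrib_left mult_ac)
    then have "(norm (outer y y *v x))^2 = (cmod (cin y x))^2" using ny by simp
    then show ?thesis by (simp add: power2_eq_iff_nonneg)
  qed
  have "spec_norm (outer y y) \<le> 1"
  proof (rule spec_leI)
    fix x show "norm (outer y y *v x) \<le> 1 * norm x" unfolding nmv using cin_le[of y x] ny by simp
  qed
  moreover have "1 \<le> spec_norm (outer y y)"
    using spec_le[of "outer y y" y] unfolding nmv cin_self ny by simp
  ultimately show "spec_norm (outer y y) = 1" by simp
qed

theorem theorem3p3:
  fixes A :: "complex^'n^'n"
  assumes "psd A"
  shows "I2 A = sqrt (Isp (conj_mat A \<circ>\<^sub>H A))"
proof -
  have A: "psd A" by fact
  have herm: "hermitian A" using A psd_sesq by blast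
  obtain w0 where w0: "w0 \<in> smplx" and mn: "\<forall>w\<in>smplx. Bf A w0 w0 \<le> Bf A w w"
    using minimizer_exists[of A] by blast
  define m where "m = Bf A w0 w0"
  have mw: "\<forall>w\<in>smplx. m \<le> Bf A w w" using mn m_def by blast
  have kk: "\<And>k. w0$k > 0 \<Longrightarrow> (\<Sum>i\<in>UNIV. (cmod (A$i$k))^2 * w0$i) \<le> Bf A w0 w0"
    using kkt[OF herm w0 mn] by blast
  define y where "y = (\<chi> i. complex_of_real (sqrt (w0$i)))"
  define B0 where "B0 = outer y y"
  have B0: "psd B0" unfolding B0_def by (rule psd_outer)
  have fB0: "frob_norm B0 = 1" and fAB0: "frob_norm (A \<circ>\<^sub>H B0) = sqrt m" and sB0: "spec_norm B0 = 1"
    using B0_props[OF w0] unfolding B0_def y_def m_def by auto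
  have su: "spec_norm (conj_mat A \<circ>\<^sub>H A \<circ>\<^sub>H B0) \<le> m"
    using spec_upper[OF herm w0 kk] unfolding B0_def y_def m_def by blast
  have sl: "m \<le> spec_norm (conj_mat A \<circ>\<^sub>H A \<circ>\<^sub>H B0)" by (rule spec_lower[OF A B0 sB0 mw])
  have I2: "I2 A = sqrt m"
    unfolding I2_def
  proof (rule cInf_eq_minimum)
    show "sqrt m \<in> {frob_norm (A \<circ>\<^sub>H B) |B. psd B \<and> frob_norm B = 1}"
      using B0 fB0 fAB0 by force
  next
    fix x assume "x \<in> {frob_norm (A \<circ>\<^sub>H B) |B. psd B \<and> frob_norm B = 1}"
    then obtain B where B: "psd B" "frob_norm B = 1" and x: "x = frob_norm (A \<circ>\<^sub>H B)" by blast
    have "m \<le> x^2" using frob_lower[OF A B mw] x by simp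
    then have "sqrt m \<le> sqrt (x^2)" by (rule real_sqrt_le_mono)
    also have "sqrt (x^2) = x" unfolding x frob_norm_def by (simp add: sum_nonneg)
    finally show "sqrt m \<le> x" .
  qed
  have Isp: "Isp (conj_mat A \<circ>\<^sub>H A) = m"
    unfolding Isp_def
  proof (rule cInf_eq_minimum)
    show "m \<in> {spec_norm (conj_mat A \<circ>\<^sub>H A \<circ>\<^sub>H B) |B. psd B \<and> spec_norm B = 1}"
      using B0 sB0 su sl by (intro CollectI exI[of _ B0]) simp
  next
    fix x assume "x \<in> {spec_norm (conj_mat A \<circ>\<^sub>H A \<circ>\<^sub>H B) |B. psd B \<and> spec_norm B = 1}"
    then obtain B where B: "psd B" "spec_norm B = 1" and x: "x = spec_norm (conj_mat A \<circ>\<^sub>H A \<circ>\<^sub>H B)" by blast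
    show "m \<le> x" unfolding x by (rule spec_lower[OF A B mw])
  qed
  show ?thesis unfolding I2 Isp ..
qed

end
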